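(* Let $G$ be a finite abelian group with dual group $\widehat G$, and let $F=(F(s,\sigma))_{s\in G,\sigma\in\widehat G}$ be its Fourier matrix, a unitary matrix whose columns $F(\cdot,\sigma)$ are the normalized characters, so that $|F(s,\sigma)|^2=1/|G|$ for all $s,\sigma$. Let $S\subseteq G$ and $\Sigma\subseteq\widehat G$ be symmetric subsets ($S=-S$, $\Sigma=\Sigma^{-1}$) with $|S|\ge|\Sigma|$. Let $P$ be the orthogonal projection of $\ell^2(G)$ onto $\mathrm{span}\{F(\cdot,\sigma):\sigma\in\Sigma\}$ and let $(Qf)(s)=\mathbbm{1}_S(s)f(s)$. Suppose $\mu_1\ge\mu_2\ge\cdots\ge\mu_{|\Sigma|}$ are the nonzero eigenvalues of $PQ$, with corresponding orthonormal eigenvectors $\varphi_1,\dots,\varphi_{|\Sigma|}$. Then for every $\sigma\in\widehat G$, $\sum_{\nu=1}^{|\Sigma|}\mu_\nu|F\varphi_\nu(\sigma)|^2=\frac{|S|}{|G|}\mathbbm{1}_\Sigma(\sigma),$ where $F\varphi(\sigma)=\sum_{s\in G}\varphi(s)\overline{F(s,\sigma)}$.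
   Context: $\ell^2(G)$ is the space of complex functions on $G$ with the standard inner product. $\mathbbm{1}_A$ denotes the indicator function of a set $A$. *)

theory Defs
  imports Complex_Main
begin

definition l2_inner :: "('a::finite \<Rightarrow> complex) \<Rightarrow> ('a \<Rightarrow> complex) \<Rightarrow> complex" where
  "l2_inner f g = (\<Sum>s\<in>UNIV. f s * cnj (g s))"

definition character :: "('a::ab_group_add \<Rightarrow> complex) \<Rightarrow> bool" where
  "character \<chi> \<longleftrightarrow> (\<forall>x. cmod (\<chi> x) = 1) \<and> (\<forall>x y. \<chi> (x + y) = \<chi> x * \<chi> y)"

definition dual_group :: "('a::ab_group_add \<Rightarrow> complex) set" where
  "dual_group = {\<chi>. character \<chi>}"

definition dual_inv :: "('a \<Rightarrow> complex) \<Rightarrow> ('a \<Rightarrow> complex)" where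
  "dual_inv \<chi> = (\<lambda>x. inverse (\<chi> x))"

definition fourier :: "'a::{ab_group_add,finite} \<Rightarrow> ('a \<Rightarrow> complex) \<Rightarrow> complex" where
  "fourier s \<sigma> = \<sigma> s / complex_of_real (sqrt (real (card (UNIV::'a set))))"

definition fourier_transform :: "('a::{ab_group_add,finite} \<Rightarrow> complex) \<Rightarrow> ('a \<Rightarrow> complex) \<Rightarrow> complex" where
  "fourier_transform \<phi> \<sigma> = (\<Sum>s\<in>UNIV. \<phi> s * cnj (fourier s \<sigma>))"

definition col_span :: "('a::{ab_group_add,finite} \<Rightarrow> complex) set \<Rightarrow> ('a \<Rightarrow> complex) set" where
  "col_span \<Sigma> = {g. \<exists>c. g = (\<lambda>s. \<Sum>\<sigma>\<in>\<Sigma>. c \<sigma> * fourier s \<sigma>)}"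

definition proj_P :: "('a::{ab_group_add,finite} \<Rightarrow> complex) set \<Rightarrow> ('a \<Rightarrow> complex) \<Rightarrow> ('a \<Rightarrow> complex)" where
  "proj_P \<Sigma> f = (THE g. g \<in> col_span \<Sigma> \<and>
      (\<forall>\<sigma>\<in>\<Sigma>. l2_inner (\<lambda>s. f s - g s) (\<lambda>s. fourier s \<sigma>) = 0))"

definition mult_Q :: "'a set \<Rightarrow> ('a \<Rightarrow> complex) \<Rightarrow> ('a \<Rightarrow> complex)" where
  "mult_Q S f = (\<lambda>s. if s \<in> S then f s else 0)"

end

theory Submission
  imports Defs "Jordan_Normal_Form.Determinant"
begin

lemma char_0: assumes "character \<chi>" shows "\<chi> 0 = 1"
proof -
  have "\<chi> 0 = \<chi> 0 * \<chi> 0" using assms unfolding character_def by (metis add_0)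
  moreover have "\<chi> 0 \<noteq> 0" using assms unfolding character_def by (metis norm_zero zero_neq_one)
  ultimately show ?thesis by (metis mult_cancel_left1)
qed

lemma char_nz: assumes "character \<chi>" shows "\<chi> x \<noteq> 0"
  using assms unfolding character_def by (metis norm_zero zero_neq_one)

lemma char_sum_pow: assumes "character \<chi>" shows "\<chi> (\<Sum>i<k. x) = \<chi> x ^ k"
proof (induction k)
  case 0 then show ?case using char_0[OF assms] by simp
next
  case (Suc k)
  have "\<chi> (\<Sum>i<Suc k. x) = \<chi> ((\<Sum>i<k. x) + x)" by simp
  also have "\<dots> = \<chi> (\<Sum>i<k. x) * \<chi> x" using assms unfolding character_def by blast
  finally show ?case using Suc by simp
qed

lemma char_root:
  fixes \<chi> :: "'a::{ab_group_add,finite} \<Rightarrow> complex"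
  assumes "character \<chi>" shows "\<exists>k\<in>{1..card (UNIV::'a set)}. \<chi> x ^ k = 1"
proof -
  let ?f = "\<lambda>k::nat. (\<Sum>i<k. x)"
  have "\<not> inj_on ?f {0..card (UNIV::'a set)}"
  proof
    assume "inj_on ?f {0..card (UNIV::'a set)}"
    then have "card (?f ` {0..card (UNIV::'a set)}) = Suc (card (UNIV::'a set))" by (simp add: card_image)
    moreover have "card (?f ` {0..card (UNIV::'a set)}) \<le> card (UNIV::'a set)" by (rule card_mono) auto
    ultimately show False by simp
  qed
  then obtain i j where ij: "i \<in> {0..card (UNIV::'a set)}" "j \<in> {0..card (UNIV::'a set)}" "i \<noteq> j" "?f i = ?f j"
    unfolding inj_on_def by blast
  have key: "\<chi> x ^ (b - a) = 1" if "a < b" "\<chi> x ^ a = \<chi> x ^ b" for a b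
  proof -
    have "b = a + (b - a)" using that by simp
    then have "\<chi> x ^ b = \<chi> x ^ a * \<chi> x ^ (b - a)" by (metis power_add)
    then show ?thesis using that char_nz[OF assms, of x] by simp
  qed
  have eq: "\<chi> x ^ i = \<chi> x ^ j" using ij(4) char_sum_pow[OF assms] by metis
  show ?thesis
  proof (cases "i < j")
    case True then show ?thesis using key[OF True eq] ij by (intro bexI[of _ "j - i"]) auto
  next
    case False then have "j < i" using ij by simp
    then show ?thesis using key[OF \<open>j < i\<close> eq[symmetric]] ij by (intro bexI[of _ "i - j"]) auto
  qed
qed

lemma finite_dual: "finite (dual_group :: ('a::{ab_group_add,finite} \<Rightarrow> complex) set)"
proof -
  define R where "R = (\<Union>k\<in>{1..card (UNIV::'a set)}. {z::complex. z ^ k = 1})"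
  have fR: "finite R" unfolding R_def by (auto intro: finite_roots_unity)
  have "finite {f::'a \<Rightarrow> complex. \<forall>x. (x \<in> UNIV \<longrightarrow> f x \<in> R) \<and> (x \<notin> UNIV \<longrightarrow> f x = 0)}"
    by (rule finite_set_of_finite_funs) (auto simp: fR)
  moreover have "dual_group \<subseteq> {f::'a \<Rightarrow> complex. \<forall>x. (x \<in> UNIV \<longrightarrow> f x \<in> R) \<and> (x \<notin> UNIV \<longrightarrow> f x = 0)}"
    using char_root unfolding dual_group_def R_def by fastforce
  ultimately show ?thesis by (rule finite_subset[rotated])
qed

lemma char_orth:
  fixes \<chi> \<psi> :: "'a::{ab_group_add,finite} \<Rightarrow> complex"
  assumes "character \<chi>" "character \<psi>" "\<chi> \<noteq> \<psi>"
  shows "(\<Sum>s\<in>UNIV. \<chi> s * cnj (\<psi> s)) = 0"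
proof -
  obtain t where t: "\<chi> t \<noteq> \<psi> t" using assms(3) by blast
  let ?T = "(\<Sum>s\<in>UNIV. \<chi> s * cnj (\<psi> s))"
  have "?T = (\<Sum>s\<in>UNIV. \<chi> (s + t) * cnj (\<psi> (s + t)))"
    by (rule sum.reindex_bij_witness[of _ "\<lambda>s. s + t" "\<lambda>s. s - t"]) auto
  also have "\<dots> = (\<Sum>s\<in>UNIV. (\<chi> t * cnj (\<psi> t)) * (\<chi> s * cnj (\<psi> s)))"
    using assms(1,2) unfolding character_def by (intro sum.cong) (auto simp: algebra_simps)
  also have "\<dots> = (\<chi> t * cnj (\<psi> t)) * ?T" by (simp add: sum_distrib_left)
  finally have E: "?T * (1 - \<chi> t * cnj (\<psi> t)) = 0" by (simp add: algebra_simps)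
  have p1: "cnj (\<psi> t) * \<psi> t = 1" using assms(2) unfolding character_def
    by (metis complex_norm_square mult.commute of_real_1 power_one)
  have "\<chi> t * cnj (\<psi> t) \<noteq> 1"
  proof
    assume "\<chi> t * cnj (\<psi> t) = 1"
    then have "\<chi> t * cnj (\<psi> t) * \<psi> t = \<psi> t" by simp
    then show False using p1 t by (simp add: mult.assoc)
  qed
  then show ?thesis using E by simp
qed


lemma e_on:
  fixes \<tau> \<tau>' :: "'a::{ab_group_add,finite} \<Rightarrow> complex"
  assumes "\<tau> \<in> dual_group" "\<tau>' \<in> dual_group"
  shows "l2_inner (\<lambda>s. fourier s \<tau>) (\<lambda>s. fourier s \<tau>') = (if \<tau> = \<tau>' then 1 else 0)"
proof -
  let ?G = "real (card (UNIV::'a set))"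
  have Gpos: "?G > 0" by (simp add: card_gt_0_iff)
  have sq: "complex_of_real (sqrt ?G) * complex_of_real (sqrt ?G) = of_real ?G"
  proof -
    have "sqrt ?G * sqrt ?G = ?G" using Gpos by simp
    from arg_cong[where f=complex_of_real, OF this] show ?thesis by (simp only: of_real_mult)
  qed
  have "l2_inner (\<lambda>s. fourier s \<tau>) (\<lambda>s. fourier s \<tau>') = (\<Sum>s\<in>UNIV. \<tau> s * cnj (\<tau>' s)) / of_real ?G"
    unfolding l2_inner_def sum_divide_distrib
  proof (intro sum.cong refl)
    fix s
    have "fourier s \<tau> * cnj (fourier s \<tau>') = \<tau> s * cnj (\<tau>' s) / (complex_of_real (sqrt ?G) * complex_of_real (sqrt ?G))"
      unfolding fourier_def by simp
    then show "fourier s \<tau> * cnj (fourier s \<tau>') = \<tau> s * cnj (\<tau>' s) / of_real ?G"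
      by (simp only: sq)
  qed
  also have "\<dots> = (if \<tau> = \<tau>' then 1 else 0)"
  proof (cases "\<tau> = \<tau>'")
    case True
    have "\<tau> s * cnj (\<tau> s) = 1" for s
    proof -
      have "cmod (\<tau> s) = 1" using assms(1) unfolding dual_group_def character_def by blast
      moreover have "\<tau> s * cnj (\<tau> s) = of_real ((cmod (\<tau> s))^2)" by (simp only: complex_norm_square)
      ultimately show ?thesis by simp
    qed
    then show ?thesis using True Gpos by simp
  next
    case False then show ?thesis using char_orth assms unfolding dual_group_def by auto
  qed
  finally show ?thesis .
qed

lemma l2_lin: "finite T \<Longrightarrow> l2_inner (\<lambda>s. \<Sum>\<tau>\<in>T. c \<tau> * g \<tau> s) h = (\<Sum>\<tau>\<in>T. c \<tau> * l2_inner (g \<tau>) h)"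
proof -
  have "l2_inner (\<lambda>s. \<Sum>\<tau>\<in>T. c \<tau> * g \<tau> s) h = (\<Sum>s\<in>UNIV. \<Sum>\<tau>\<in>T. c \<tau> * (g \<tau> s * cnj (h s)))"
    unfolding l2_inner_def by (simp add: sum_distrib_right mult.assoc)
  also have "\<dots> = (\<Sum>\<tau>\<in>T. \<Sum>s\<in>UNIV. c \<tau> * (g \<tau> s * cnj (h s)))" by (rule sum.swap)
  also have "\<dots> = (\<Sum>\<tau>\<in>T. c \<tau> * l2_inner (g \<tau>) h)"
    unfolding l2_inner_def by (simp add: sum_distrib_left)
  finally show ?thesis .
qed

lemma l2_cnj: "l2_inner f g = cnj (l2_inner g f)"
  unfolding l2_inner_def by (simp add: mult.commute)

lemma l2_diff: "l2_inner (\<lambda>s. f s - g s) h = l2_inner f h - l2_inner g h"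
  unfolding l2_inner_def by (simp add: sum_subtractf left_diff_distrib)

lemma inner_span:
  fixes \<Sigma> :: "('a::{ab_group_add,finite} \<Rightarrow> complex) set"
  assumes "finite \<Sigma>" "\<Sigma> \<subseteq> dual_group" "\<sigma> \<in> dual_group"
  shows "l2_inner (\<lambda>s. \<Sum>\<tau>\<in>\<Sigma>. c \<tau> * fourier s \<tau>) (\<lambda>s. fourier s \<sigma>) = (if \<sigma> \<in> \<Sigma> then c \<sigma> else 0)"
proof -
  have "l2_inner (\<lambda>s. \<Sum>\<tau>\<in>\<Sigma>. c \<tau> * fourier s \<tau>) (\<lambda>s. fourier s \<sigma>)
      = (\<Sum>\<tau>\<in>\<Sigma>. c \<tau> * (if \<tau> = \<sigma> then 1 else 0))"
    unfolding l2_lin[OF assms(1), of c "\<lambda>\<tau> s. fourier s \<tau>"]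
    by (intro sum.cong refl) (use assms in \<open>simp add: e_on subsetD\<close>)
  also have "\<dots> = (if \<sigma> \<in> \<Sigma> then c \<sigma> else 0)"
    using assms(1) by (simp add: if_distrib[of "\<lambda>x. _ * x"] sum.delta' cong: if_cong)
  finally show ?thesis .
qed

lemma proj_props:
  fixes \<Sigma> :: "('a::{ab_group_add,finite} \<Rightarrow> complex) set"
  assumes "finite \<Sigma>" "\<Sigma> \<subseteq> dual_group"
  shows "proj_P \<Sigma> f \<in> col_span \<Sigma> \<and>
      (\<forall>\<sigma>\<in>\<Sigma>. l2_inner (\<lambda>s. f s - proj_P \<Sigma> f s) (\<lambda>s. fourier s \<sigma>) = 0)"
  unfolding proj_P_def
proof (rule theI[where a = "\<lambda>s. \<Sum>\<tau>\<in>\<Sigma>. l2_inner f (\<lambda>s. fourier s \<tau>) * fourier s \<tau>"])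
  let ?a = "\<lambda>s. \<Sum>\<tau>\<in>\<Sigma>. l2_inner f (\<lambda>s. fourier s \<tau>) * fourier s \<tau>"
  have 1: "?a \<in> col_span \<Sigma>" unfolding col_span_def by (rule CollectI, rule exI, rule refl)
  have 2: "l2_inner (\<lambda>s. f s - ?a s) (\<lambda>s. fourier s \<sigma>) = 0" if "\<sigma> \<in> \<Sigma>" for \<sigma>
  proof -
    have "\<sigma> \<in> dual_group" using that assms(2) by blast
    from inner_span[OF assms this, of "\<lambda>\<tau>. l2_inner f (\<lambda>s. fourier s \<tau>)"] that
    have "l2_inner ?a (\<lambda>s. fourier s \<sigma>) = l2_inner f (\<lambda>s. fourier s \<sigma>)" by simp
    then show ?thesis by (simp only: l2_diff) simp
  qed
  show "?a \<in> col_span \<Sigma> \<and> (\<forall>\<sigma>\<in>\<Sigma>. l2_inner (\<lambda>s. f s - ?a s) (\<lambda>s. fourier s \<sigma>) = 0)"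
    using 1 2 by blast
next
  fix g assume g: "g \<in> col_span \<Sigma> \<and> (\<forall>\<sigma>\<in>\<Sigma>. l2_inner (\<lambda>s. f s - g s) (\<lambda>s. fourier s \<sigma>) = 0)"
  then obtain c where c: "g = (\<lambda>s. \<Sum>\<sigma>\<in>\<Sigma>. c \<sigma> * fourier s \<sigma>)" unfolding col_span_def by blast
  have "l2_inner f (\<lambda>s. fourier s \<sigma>) = c \<sigma>" if "\<sigma> \<in> \<Sigma>" for \<sigma>
  proof -
    have "\<sigma> \<in> dual_group" using that assms(2) by blast
    from inner_span[OF assms this, of c] that
    have "l2_inner g (\<lambda>s. fourier s \<sigma>) = c \<sigma>" by (simp add: c)
    moreover have "l2_inner (\<lambda>s. f s - g s) (\<lambda>s. fourier s \<sigma>) = 0" using g that by blast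
    ultimately show ?thesis by (simp only: l2_diff) simp
  qed
  then show "g = (\<lambda>s. \<Sum>\<tau>\<in>\<Sigma>. l2_inner f (\<lambda>s. fourier s \<tau>) * fourier s \<tau>)"
    unfolding c by (intro ext sum.cong) auto
qed

theorem proposition1:
  fixes S :: "'a::{ab_group_add,finite} set"
    and \<Sigma> :: "('a \<Rightarrow> complex) set"
    and \<mu> :: "nat \<Rightarrow> real"
    and \<phi> :: "nat \<Rightarrow> 'a \<Rightarrow> complex"
    and \<sigma> :: "'a \<Rightarrow> complex"
  assumes S_sym: "uminus ` S = S"
    and Sigma_sub: "\<Sigma> \<subseteq> dual_group"
    and Sigma_sym: "dual_inv ` \<Sigma> = \<Sigma>"
    and card_le: "card \<Sigma> \<le> card S"
    and mu_mono: "\<And>i j. 1 \<le> i \<Longrightarrow> i \<le> j \<Longrightarrow> j \<le> card \<Sigma> \<Longrightarrow> \<mu> j \<le> \<mu> i"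
    and mu_nz: "\<And>\<nu>. \<nu> \<in> {1..card \<Sigma>} \<Longrightarrow> \<mu> \<nu> \<noteq> 0"
    and eigen: "\<And>\<nu>. \<nu> \<in> {1..card \<Sigma>} \<Longrightarrow>
        proj_P \<Sigma> (mult_Q S (\<phi> \<nu>)) = (\<lambda>s. complex_of_real (\<mu> \<nu>) * \<phi> \<nu> s)"
    and orthonormal: "\<And>\<nu> \<nu>'. \<nu> \<in> {1..card \<Sigma>} \<Longrightarrow> \<nu>' \<in> {1..card \<Sigma>} \<Longrightarrow>
        l2_inner (\<phi> \<nu>) (\<phi> \<nu>') = (if \<nu> = \<nu>' then 1 else 0)"
    and sigma_dual: "\<sigma> \<in> dual_group"
  shows "(\<Sum>\<nu>\<in>{1..card \<Sigma>}. \<mu> \<nu> * (cmod (fourier_transform (\<phi> \<nu>) \<sigma>))\<^sup>2)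
         = real (card S) / real (card (UNIV::'a set)) * (if \<sigma> \<in> \<Sigma> then 1 else 0)"
proof -
  let ?n = "card \<Sigma>"
  let ?G = "real (card (UNIV::'a set))"
  define A where "A = (\<lambda>\<nu> \<tau>. fourier_transform (\<phi> \<nu>) \<tau>)"
  define M where "M = (\<lambda>\<tau> \<sigma>'. l2_inner (mult_Q S (\<lambda>s. fourier s \<tau>)) (\<lambda>s. fourier s \<sigma>'))"
  have fin: "finite \<Sigma>" using Sigma_sub finite_dual by (rule finite_subset)
  have A_inner: "l2_inner (\<phi> \<nu>) (\<lambda>s. fourier s \<tau>) = A \<nu> \<tau>" for \<nu> \<tau>
    unfolding A_def l2_inner_def fourier_transform_def by simp
  have inS: "\<tau> \<in> dual_group" if "\<tau> \<in> \<Sigma>" for \<tau> using that Sigma_sub by blast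
  have phi_exp: "\<phi> \<nu> = (\<lambda>s. \<Sum>\<tau>\<in>\<Sigma>. A \<nu> \<tau> * fourier s \<tau>)" if \<nu>: "\<nu> \<in> {1..?n}" for \<nu>
  proof -
    have "proj_P \<Sigma> (mult_Q S (\<phi> \<nu>)) \<in> col_span \<Sigma>" using proj_props[OF fin Sigma_sub] by blast
    then obtain c where c: "(\<lambda>s. complex_of_real (\<mu> \<nu>) * \<phi> \<nu> s) = (\<lambda>s. \<Sum>\<tau>\<in>\<Sigma>. c \<tau> * fourier s \<tau>)"
      unfolding eigen[OF \<nu>] col_span_def by blast
    have mnz: "complex_of_real (\<mu> \<nu>) \<noteq> 0" using mu_nz[OF \<nu>] by simp
    have e1: "\<phi> \<nu> = (\<lambda>s. \<Sum>\<tau>\<in>\<Sigma>. (c \<tau> / complex_of_real (\<mu> \<nu>)) * fourier s \<tau>)"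
    proof
      fix s
      have "complex_of_real (\<mu> \<nu>) * \<phi> \<nu> s = (\<Sum>\<tau>\<in>\<Sigma>. c \<tau> * fourier s \<tau>)" using fun_cong[OF c, of s] by simp
      then have "\<phi> \<nu> s = (\<Sum>\<tau>\<in>\<Sigma>. c \<tau> * fourier s \<tau>) / complex_of_real (\<mu> \<nu>)"
        using mnz by (simp add: field_simps)
      then show "\<phi> \<nu> s = (\<Sum>\<tau>\<in>\<Sigma>. (c \<tau> / complex_of_real (\<mu> \<nu>)) * fourier s \<tau>)"
        by (simp add: sum_divide_distrib)
    qed
    have "A \<nu> \<tau> = c \<tau> / complex_of_real (\<mu> \<nu>)" if "\<tau> \<in> \<Sigma>" for \<tau>
      using inner_span[OF fin Sigma_sub inS[OF that], of "\<lambda>\<tau>. c \<tau> / complex_of_real (\<mu> \<nu>)"] that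
      A_inner[of \<nu> \<tau>] e1 by simp
    then show ?thesis by (subst e1) (auto intro!: sum.cong)
  qed
  have A_out: "A \<nu> \<sigma>' = 0" if \<nu>: "\<nu> \<in> {1..?n}" and "\<sigma>' \<in> dual_group" "\<sigma>' \<notin> \<Sigma>" for \<nu> \<sigma>'
    using inner_span[OF fin Sigma_sub that(2), of "A \<nu>"] that A_inner[of \<nu> \<sigma>'] phi_exp[OF \<nu>] by simp
  have eigA: "complex_of_real (\<mu> \<nu>) * A \<nu> \<sigma>' = (\<Sum>\<tau>\<in>\<Sigma>. A \<nu> \<tau> * M \<tau> \<sigma>')"
    if \<nu>: "\<nu> \<in> {1..?n}" and \<sigma>': "\<sigma>' \<in> \<Sigma>" for \<nu> \<sigma>'
  proof -
    have "l2_inner (\<lambda>s. mult_Q S (\<phi> \<nu>) s - proj_P \<Sigma> (mult_Q S (\<phi> \<nu>)) s) (\<lambda>s. fourier s \<sigma>') = 0"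
      using proj_props[OF fin Sigma_sub] \<sigma>' by blast
    then have "l2_inner (mult_Q S (\<phi> \<nu>)) (\<lambda>s. fourier s \<sigma>') =
        l2_inner (\<lambda>s. complex_of_real (\<mu> \<nu>) * \<phi> \<nu> s) (\<lambda>s. fourier s \<sigma>')"
      unfolding eigen[OF \<nu>] by (simp only: l2_diff) simp
    also have "\<dots> = complex_of_real (\<mu> \<nu>) * A \<nu> \<sigma>'"
      unfolding A_inner[symmetric] l2_inner_def by (simp add: sum_distrib_left mult.assoc)
    finally have 1: "l2_inner (mult_Q S (\<phi> \<nu>)) (\<lambda>s. fourier s \<sigma>') = complex_of_real (\<mu> \<nu>) * A \<nu> \<sigma>'" .
    have "mult_Q S (\<phi> \<nu>) = (\<lambda>s. \<Sum>\<tau>\<in>\<Sigma>. A \<nu> \<tau> * mult_Q S (\<lambda>s. fourier s \<tau>) s)"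
    proof
      fix s show "mult_Q S (\<phi> \<nu>) s = (\<Sum>\<tau>\<in>\<Sigma>. A \<nu> \<tau> * mult_Q S (\<lambda>s. fourier s \<tau>) s)"
        by (cases "s \<in> S") (simp_all add: mult_Q_def phi_exp[OF \<nu>])
    qed
    then have "l2_inner (mult_Q S (\<phi> \<nu>)) (\<lambda>s. fourier s \<sigma>') = (\<Sum>\<tau>\<in>\<Sigma>. A \<nu> \<tau> * M \<tau> \<sigma>')"
      unfolding M_def by (simp only: l2_lin[OF fin])
    with 1 show ?thesis by simp
  qed
  have rows: "(\<Sum>\<tau>\<in>\<Sigma>. A \<nu> \<tau> * cnj (A \<nu>' \<tau>)) = (if \<nu> = \<nu>' then 1 else 0)"
    if \<nu>: "\<nu> \<in> {1..?n}" and \<nu>': "\<nu>' \<in> {1..?n}" for \<nu> \<nu>'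
  proof -
    have "l2_inner (\<phi> \<nu>) (\<phi> \<nu>') = (\<Sum>\<tau>\<in>\<Sigma>. A \<nu> \<tau> * l2_inner (\<lambda>s. fourier s \<tau>) (\<phi> \<nu>'))"
      by (subst phi_exp[OF \<nu>]) (rule l2_lin[OF fin])
    also have "\<dots> = (\<Sum>\<tau>\<in>\<Sigma>. A \<nu> \<tau> * cnj (A \<nu>' \<tau>))"
      by (intro sum.cong refl) (simp add: l2_cnj[of "\<lambda>s. fourier s _"] A_inner)
    finally show ?thesis using orthonormal[OF \<nu> \<nu>'] by simp
  qed
  \<comment> \<open>column orthonormality via square matrices\<close>
  have cols: "(\<Sum>\<nu>\<in>{1..?n}. A \<nu> \<tau> * cnj (A \<nu> \<tau>')) = (if \<tau> = \<tau>' then 1 else 0)"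
    if \<tau>: "\<tau> \<in> \<Sigma>" and \<tau>': "\<tau>' \<in> \<Sigma>" for \<tau> \<tau>'
  proof -
    obtain h where h: "bij_betw h {0..<?n} \<Sigma>" using ex_bij_betw_nat_finite[OF fin] by blast
    define Am where "Am = mat ?n ?n (\<lambda>(i,j). A (Suc i) (h j))"
    define Bm where "Bm = mat ?n ?n (\<lambda>(i,j). cnj (A (Suc j) (h i)))"
    have Am: "Am \<in> carrier_mat ?n ?n" and Bm: "Bm \<in> carrier_mat ?n ?n"
      unfolding Am_def Bm_def by auto
    have "Am * Bm = 1\<^sub>m ?n"
    proof (rule eq_matI)
      fix i k assume i: "i < dim_row (1\<^sub>m ?n)" and k: "k < dim_col (1\<^sub>m ?n)"
      have "(Am * Bm) $$ (i, k) = (\<Sum>j\<in>{0..<?n}. A (Suc i) (h j) * cnj (A (Suc k) (h j)))"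
        using i k unfolding Am_def Bm_def by (simp add: scalar_prod_def)
      also have "\<dots> = (\<Sum>\<tau>\<in>\<Sigma>. A (Suc i) \<tau> * cnj (A (Suc k) \<tau>))"
        by (rule sum.reindex_bij_betw[OF h])
      also have "\<dots> = (if i = k then 1 else 0)" using rows[of "Suc i" "Suc k"] i k by simp
      finally show "(Am * Bm) $$ (i, k) = 1\<^sub>m ?n $$ (i, k)" using i k by simp
    qed (auto simp: Am_def Bm_def)
    from mat_mult_left_right_inverse[OF Am Bm this] have BA: "Bm * Am = 1\<^sub>m ?n" .
    obtain j where j: "j < ?n" "h j = \<tau>'" using h \<tau>' unfolding bij_betw_def by force
    obtain l where l: "l < ?n" "h l = \<tau>" using h \<tau> unfolding bij_betw_def by force
    have "(Bm * Am) $$ (j, l) = (\<Sum>i\<in>{0..<?n}. cnj (A (Suc i) \<tau>') * A (Suc i) \<tau>)"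
      using j l unfolding Am_def Bm_def by (simp add: scalar_prod_def)
    moreover have "(Bm * Am) $$ (j, l) = (if \<tau> = \<tau>' then 1 else 0)"
    proof -
      have "(j = l) = (\<tau> = \<tau>')" using h j l unfolding bij_betw_def inj_on_def by auto
      then show ?thesis unfolding BA using j l by simp
    qed
    moreover have "(\<Sum>\<nu>\<in>{1..?n}. A \<nu> \<tau> * cnj (A \<nu> \<tau>')) = (\<Sum>i\<in>{0..<?n}. cnj (A (Suc i) \<tau>') * A (Suc i) \<tau>)"
      by (rule sum.reindex_bij_witness[of _ Suc "\<lambda>\<nu>. \<nu> - 1"]) (auto simp: mult.commute)
    ultimately show ?thesis by simp
  qed
  have Mss: "M \<sigma> \<sigma> = of_real (real (card S) / ?G)" if "\<sigma> \<in> dual_group"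
  proof -
    have Gpos: "?G > 0" by (simp add: card_gt_0_iff)
    have one: "fourier s \<sigma> * cnj (fourier s \<sigma>) = of_real (1 / ?G)" for s
    proof -
      have c1: "cmod (\<sigma> s) = 1" using that unfolding dual_group_def character_def by blast
      have "cmod (fourier s \<sigma>) = cmod (\<sigma> s) / sqrt ?G" unfolding fourier_def
        by (simp add: norm_divide)
      then have "(cmod (fourier s \<sigma>))^2 = 1 / ?G" using c1 Gpos by (simp add: power_divide)
      moreover have "fourier s \<sigma> * cnj (fourier s \<sigma>) = of_real ((cmod (fourier s \<sigma>))^2)"
        by (simp only: complex_norm_square)
      ultimately show ?thesis by simp
    qed
    have "M \<sigma> \<sigma> = (\<Sum>s\<in>UNIV. if s \<in> S then of_real (1 / ?G) else 0)"
      unfolding M_def l2_inner_def mult_Q_def by (intro sum.cong refl) (simp add: one)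
    also have "\<dots> = (\<Sum>s\<in>S. of_real (1 / ?G))" by (simp add: sum.If_cases)
    also have "\<dots> = of_real (real (card S) / ?G)" by simp
    finally show ?thesis .
  qed
  have main: "(\<Sum>\<nu>\<in>{1..?n}. complex_of_real (\<mu> \<nu>) * (A \<nu> \<sigma> * cnj (A \<nu> \<sigma>)))
      = of_real (real (card S) / ?G * (if \<sigma> \<in> \<Sigma> then 1 else 0))"
  proof (cases "\<sigma> \<in> \<Sigma>")
    case False
    then show ?thesis using A_out[OF _ sigma_dual False] by simp
  next
    case True
    have "(\<Sum>\<nu>\<in>{1..?n}. complex_of_real (\<mu> \<nu>) * (A \<nu> \<sigma> * cnj (A \<nu> \<sigma>)))
        = (\<Sum>\<nu>\<in>{1..?n}. \<Sum>\<tau>\<in>\<Sigma>. M \<tau> \<sigma> * (A \<nu> \<tau> * cnj (A \<nu> \<sigma>)))"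
    proof (intro sum.cong refl)
      fix \<nu> assume \<nu>: "\<nu> \<in> {1..?n}"
      have "complex_of_real (\<mu> \<nu>) * (A \<nu> \<sigma> * cnj (A \<nu> \<sigma>)) = (complex_of_real (\<mu> \<nu>) * A \<nu> \<sigma>) * cnj (A \<nu> \<sigma>)"
        by (simp only: mult.assoc)
      also have "\<dots> = (\<Sum>\<tau>\<in>\<Sigma>. A \<nu> \<tau> * M \<tau> \<sigma>) * cnj (A \<nu> \<sigma>)" by (simp only: eigA[OF \<nu> True])
      also have "\<dots> = (\<Sum>\<tau>\<in>\<Sigma>. M \<tau> \<sigma> * (A \<nu> \<tau> * cnj (A \<nu> \<sigma>)))"
        unfolding sum_distrib_right by (intro sum.cong refl) (simp only: mult_ac)
      finally show "complex_of_real (\<mu> \<nu>) * (A \<nu> \<sigma> * cnj (A \<nu> \<sigma>)) = (\<Sum>\<tau>\<in>\<Sigma>. M \<tau> \<sigma> * (A \<nu> \<tau> * cnj (A \<nu> \<sigma>)))" .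
    qed
    also have "\<dots> = (\<Sum>\<tau>\<in>\<Sigma>. \<Sum>\<nu>\<in>{1..?n}. M \<tau> \<sigma> * (A \<nu> \<tau> * cnj (A \<nu> \<sigma>)))" by (rule sum.swap)
    also have "\<dots> = (\<Sum>\<tau>\<in>\<Sigma>. M \<tau> \<sigma> * (if \<tau> = \<sigma> then 1 else 0))"
    proof (intro sum.cong refl)
      fix \<tau> assume "\<tau> \<in> \<Sigma>"
      then show "(\<Sum>\<nu>\<in>{1..?n}. M \<tau> \<sigma> * (A \<nu> \<tau> * cnj (A \<nu> \<sigma>))) = M \<tau> \<sigma> * (if \<tau> = \<sigma> then 1 else 0)"
        by (simp only: sum_distrib_left[symmetric] cols[OF _ True])
    qed
    also have "\<dots> = M \<sigma> \<sigma>" using fin True by (simp add: if_distrib[of "\<lambda>x. _ * x"] sum.delta' cong: if_cong)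
    finally show ?thesis using Mss[OF sigma_dual] True by simp
  qed
  have "complex_of_real (\<Sum>\<nu>\<in>{1..?n}. \<mu> \<nu> * (cmod (fourier_transform (\<phi> \<nu>) \<sigma>))\<^sup>2)
      = (\<Sum>\<nu>\<in>{1..?n}. complex_of_real (\<mu> \<nu>) * (A \<nu> \<sigma> * cnj (A \<nu> \<sigma>)))"
    unfolding of_real_sum A_def by (intro sum.cong refl) (simp only: of_real_mult complex_norm_square)
  with main show ?thesis by (simp only: of_real_eq_iff)
qed

end
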